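(* Let $n\geqslant 1$ and consider the first-quadrant spectral sequence $E^1_{k,l}=H_l(EW_n\times_{W_n}\mathcal{D}^n_k)\Rightarrow H_{k+l}(\|EW_n\times_{W_n}\mathcal{D}^n\|)$ arising from the skeletal filtration, with $d^1=\sum_{i=0}^k(-1)^i(d_i)_\ast$; thus $E^1_{k,l}\cong H_l(BW_{n-k-1})$ for $0\leqslant k\leqslant n$ (and $0$ for $k>n$), and $d^1:E^1_{k,l}\to E^1_{k-1,l}$ is the stabilization map $H_l(BW_{n-k-1})\to H_l(BW_{n-k})$ when $k$ is even and $k\geqslant 2$, and zero when $k$ is odd. Assume that for all $m<n$ the stabilization map $H_l(BW_{m-1})\to H_l(BW_m)$ is an isomorphism whenever $2l\leqslant m$. Then (1) $E^\infty_{0,l}=E^2_{0,l}=E^1_{0,l}$ for $2l\leqslant n$, and (2) $E^\infty_{k,l}=0$ whenever $k>0$ and $2(k+l)\leqslant n$.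
   Context: Standing setup: $\Gamma_1$ is an arbitrary finite Coxeter diagram with a preferred vertex $s_1$ (edge $\{s,t\}$ iff $m_{st}\geqslant3$; unlabelled edge means $m_{st}=3$, no edge means $m_{st}=2$). For $n\geqslant 2$, $\Gamma_n$ is obtained from $\Gamma_{n-1}$ by adding one new vertex $s_n$ joined by an unlabelled edge to $s_{n-1}$ and to no other vertex. $\Gamma_0$ is $\Gamma_1$ with $s_1$ deleted; $\Gamma_{-1}$ is $\Gamma_1$ with $s_1$ and all its neighbours deleted. For $n\geqslant -1$, $S_n$ is the vertex set of $\Gamma_n$ and $W_n$ the Coxeter group; $W_m$ ($m\leqslant n$) is the standard parabolic subgroup of $W_n$ generated by $S_m$, and stabilization maps are induced by these inclusions. $\mathcal{D}^n$ is the semisimplicial set with $\mathcal{D}^n_k=W_n/W_{n-k-1}$ for $0\leqslant k\leqslant n$, $\mathcal{D}^n_k=\emptyset$ for $k>n$, and face maps $d_i(cW_{n-k-1})=c(s_{n-k+i}\cdots s_{n-k+1})W_{n-k}$ (empty product for $i=0$). $EW_n\times_{W_n}\mathcal{D}^n$ is the semisimplicial space with $k$-th space $EW_n\times_{W_n}\mathcal{D}^n_k$; $\|\cdot\|$ is geometric realisation. Homology is with arbitrary constant coefficients. *)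

theory Defs
  imports "HOL-Algebra.Algebra"
begin

definition first_quadrant_homological_SS ::
  "(nat \<Rightarrow> int \<Rightarrow> int \<Rightarrow> 'a monoid) \<Rightarrow> (nat \<Rightarrow> int \<Rightarrow> int \<Rightarrow> 'a \<Rightarrow> 'a) \<Rightarrow> bool" where
  "first_quadrant_homological_SS E d \<longleftrightarrow>
     (\<forall>r\<ge>1. \<forall>k l.
        comm_group (E r k l)
      \<and> d r k l \<in> hom (E r k l) (E r (k - int r) (l + int r - 1))
      \<and> (\<forall>x\<in>carrier (E r k l).
            d r (k - int r) (l + int r - 1) (d r k l x)
              = \<one>\<^bsub>E r (k - 2 * int r) (l + 2 * int r - 2)\<^esub>)
      \<and> E (Suc r) k l \<cong>
          (subgroup_generated (E r k l)
              (kernel (E r k l) (E r (k - int r) (l + int r - 1)) (d r k l)))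
          Mod (d r (k + int r) (l - int r + 1) ` carrier (E r (k + int r) (l - int r + 1))))
   \<and> (\<forall>k l. (k < 0 \<or> l < 0) \<longrightarrow> carrier (E 1 k l) = {\<one>\<^bsub>E 1 k l\<^esub>})"

end

theory Submission
  imports Defs
begin

lemma iso_triv:
  assumes "monoid G" "G \<cong> Q" "carrier Q \<subseteq> {c}"
  shows "carrier G = {\<one>\<^bsub>G\<^esub>}"
proof -
  obtain h where h: "bij_betw h (carrier G) (carrier Q)"
    using assms(2) unfolding is_iso_def iso_def by blast
  have one: "\<one>\<^bsub>G\<^esub> \<in> carrier G" using assms(1) by (simp add: monoid.one_closed)
  have "\<forall>x\<in>carrier G. x = \<one>\<^bsub>G\<^esub>"
  proof
    fix x assume x: "x \<in> carrier G"
    have "h x = c" "h \<one>\<^bsub>G\<^esub> = c" using h x one assms(3) unfolding bij_betw_def by auto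
    then show "x = \<one>\<^bsub>G\<^esub>" using h x one unfolding bij_betw_def inj_on_def by metis
  qed
  then show ?thesis using one by blast
qed

lemma mod_carrier: "carrier (G Mod N) = (\<lambda>g. N #>\<^bsub>G\<^esub> g) ` carrier G"
  by (auto simp: FactGroup_def RCOSETS_def)

lemma mod_triv1:
  assumes "carrier G \<subseteq> {c}" shows "carrier (G Mod N) \<subseteq> {N #>\<^bsub>G\<^esub> c}"
  using assms by (auto simp: mod_carrier)

lemma mod_triv2:
  assumes "group G" shows "carrier (subgroup_generated G (carrier G) Mod carrier G) \<subseteq> {carrier G}"
proof -
  interpret group G by fact
  have sg: "subgroup (carrier G) G" by (rule subgroup_self)
  have "carrier (subgroup_generated G (carrier G)) = carrier G"
    using subgroup.carrier_subgroup_generated_subgroup[OF sg] .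
  moreover have "\<And>g. g \<in> carrier G \<Longrightarrow> carrier G #>\<^bsub>subgroup_generated G (carrier G)\<^esub> g = carrier G"
  proof -
    fix g assume g: "g \<in> carrier G"
    have "carrier G #>\<^bsub>subgroup_generated G (carrier G)\<^esub> g = carrier G #>\<^bsub>G\<^esub> g"
      by (simp add: r_coset_def)
    also have "\<dots> = carrier G" using subgroup.rcos_const[OF sg is_group g] by simp
    finally show "carrier G #>\<^bsub>subgroup_generated G (carrier G)\<^esub> g = carrier G" .
  qed
  ultimately show ?thesis by (auto simp: mod_carrier)
qed

theorem lemma9p3:
  fixes n :: nat
    and E :: "nat \<Rightarrow> int \<Rightarrow> int \<Rightarrow> 'a monoid"
    and d :: "nat \<Rightarrow> int \<Rightarrow> int \<Rightarrow> 'a \<Rightarrow> 'a"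
    and H :: "int \<Rightarrow> int \<Rightarrow> 'a monoid"
    and s :: "int \<Rightarrow> int \<Rightarrow> 'a \<Rightarrow> 'a"
  assumes n_ge: "n \<ge> 1"
    and SS: "first_quadrant_homological_SS E d"
    and E1: "\<forall>k l. 0 \<le> k \<and> k \<le> int n \<and> 0 \<le> l \<longrightarrow> E 1 k l = H (int n - k - 1) l"
    and E1_top: "\<forall>k l. k > int n \<longrightarrow> carrier (E 1 k l) = {\<one>\<^bsub>E 1 k l\<^esub>}"
    and stab_hom: "\<forall>m l. 0 \<le> m \<and> m \<le> int n \<and> 0 \<le> l \<longrightarrow> s m l \<in> hom (H (m - 1) l) (H m l)"
    and d1_even: "\<forall>k l. 2 \<le> k \<and> k \<le> int n \<and> even k \<and> 0 \<le> l \<longrightarrow>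
                    (\<forall>x\<in>carrier (E 1 k l). d 1 k l x = s (int n - k) l x)"
    and d1_odd: "\<forall>k l. odd k \<longrightarrow> (\<forall>x\<in>carrier (E 1 k l). d 1 k l x = \<one>\<^bsub>E 1 (k - 1) l\<^esub>)"
    and stab_iso: "\<forall>m l. 0 \<le> m \<and> m < int n \<and> 0 \<le> l \<and> 2 * l \<le> m \<longrightarrow>
                    s m l \<in> iso (H (m - 1) l) (H m l)"
  shows "(\<forall>l. 0 \<le> l \<and> 2 * l \<le> int n \<longrightarrow>
            (\<forall>r\<ge>1. \<forall>x\<in>carrier (E r (int r) (l - int r + 1)).
                 d r (int r) (l - int r + 1) x = \<one>\<^bsub>E r 0 l\<^esub>))
       \<and> (\<forall>k l. 0 < k \<and> 2 * (k + l) \<le> int n \<longrightarrow>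
            (\<exists>r0. \<forall>r\<ge>r0. carrier (E r k l) = {\<one>\<^bsub>E r k l\<^esub>}))"
proof -
  have grp: "\<And>r k l. r \<ge> 1 \<Longrightarrow> comm_group (E r k l)"
    using SS unfolding first_quadrant_homological_SS_def by blast
  have dhom: "\<And>r k l. r \<ge> 1 \<Longrightarrow> d r k l \<in> hom (E r k l) (E r (k - int r) (l + int r - 1))"
    using SS unfolding first_quadrant_homological_SS_def by blast
  have next_iso: "\<And>r k l. r \<ge> 1 \<Longrightarrow> E (Suc r) k l \<cong>
          (subgroup_generated (E r k l)
              (kernel (E r k l) (E r (k - int r) (l + int r - 1)) (d r k l)))
          Mod (d r (k + int r) (l - int r + 1) ` carrier (E r (k + int r) (l - int r + 1)))"
    using SS unfolding first_quadrant_homological_SS_def by blast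
  have neg: "\<And>k l. k < 0 \<or> l < 0 \<Longrightarrow> carrier (E 1 k l) = {\<one>\<^bsub>E 1 k l\<^esub>}"
    using SS unfolding first_quadrant_homological_SS_def by blast
  have mon: "\<And>r k l. r \<ge> 1 \<Longrightarrow> monoid (E r k l)"
    using grp comm_group.axioms(1) comm_monoid.axioms(1) by blast
  have gr: "\<And>r k l. r \<ge> 1 \<Longrightarrow> group (E r k l)"
    using grp comm_group.axioms(2) by blast
  have prop1: "carrier (E (Suc r) k l) = {\<one>\<^bsub>E (Suc r) k l\<^esub>}"
    if "r \<ge> 1" "carrier (E r k l) = {\<one>\<^bsub>E r k l\<^esub>}" for r k l
  proof -
    let ?K = "kernel (E r k l) (E r (k - int r) (l + int r - 1)) (d r k l)"
    let ?N = "d r (k + int r) (l - int r + 1) ` carrier (E r (k + int r) (l - int r + 1))"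
    have "carrier (subgroup_generated (E r k l) ?K) \<subseteq> {\<one>\<^bsub>E r k l\<^esub>}"
      using group.carrier_subgroup_generated_subset[OF gr[OF that(1)]] that(2) by blast
    then have "carrier (subgroup_generated (E r k l) ?K Mod ?N) \<subseteq> {?N #>\<^bsub>subgroup_generated (E r k l) ?K\<^esub> \<one>\<^bsub>E r k l\<^esub>}"
      by (rule mod_triv1)
    then show ?thesis using iso_triv[OF mon next_iso[OF that(1)]] that(1) by simp
  qed
  have propr: "carrier (E r k l) = {\<one>\<^bsub>E r k l\<^esub>}"
    if "r0 \<ge> 1" "r \<ge> r0" "carrier (E r0 k l) = {\<one>\<^bsub>E r0 k l\<^esub>}" for r0 r k l
    using that(2,1,3)
  proof (induction r rule: dec_induct)
    case base then show ?case by simp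
  next
    case (step m) then show ?case using prop1 by simp
  qed
  have E2odd: "carrier (E 2 k l) = {\<one>\<^bsub>E 2 k l\<^esub>}"
    if "1 \<le> k" "0 \<le> l" "odd k" "k + 1 \<le> int n" "2 * l \<le> int n - k - 1" for k l
  proof -
    let ?G = "E 1 k l"
    have G: "?G = H (int n - k - 1) l" using E1 that by simp
    have G1: "E 1 (k + 1) l = H (int n - k - 1 - 1) l" using E1 that
      by (smt (verit))
    have dk: "\<forall>x\<in>carrier ?G. d 1 k l x = \<one>\<^bsub>E 1 (k - 1) l\<^esub>" using d1_odd that by blast
    have K: "kernel ?G (E 1 (k - 1) l) (d 1 k l) = carrier ?G"
      using dk by (auto simp: kernel_def)
    have dk1: "\<forall>x\<in>carrier (E 1 (k+1) l). d 1 (k+1) l x = s (int n - k - 1) l x"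
      using d1_even[rule_format, of "k+1" l] that by (simp add: algebra_simps)
    have si: "s (int n - k - 1) l \<in> iso (H (int n - k - 1 - 1) l) (H (int n - k - 1) l)"
      by (intro stab_iso[rule_format]) (use that in auto)
    then have "s (int n - k - 1) l ` carrier (H (int n - k - 1 - 1) l) = carrier (H (int n - k - 1) l)"
      unfolding iso_def bij_betw_def by blast
    then have N: "d 1 (k+1) l ` carrier (E 1 (k+1) l) = carrier ?G"
      using dk1 G G1 by (metis (no_types, lifting) image_cong)
    have "carrier (subgroup_generated ?G (carrier ?G) Mod carrier ?G) \<subseteq> {carrier ?G}"
      using mod_triv2[OF gr] by simp
    moreover have "E (Suc 1) k l \<cong> subgroup_generated ?G (carrier ?G) Mod carrier ?G"
      using next_iso[of 1 k l] K N by simp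
    ultimately have "carrier (E (Suc 1) k l) = {\<one>\<^bsub>E (Suc 1) k l\<^esub>}"
      using iso_triv mon by (metis le_add2 plus_1_eq_Suc)
    then show ?thesis by (simp add: numeral_2_eq_2)
  qed
  have E2even: "carrier (E 2 k l) = {\<one>\<^bsub>E 2 k l\<^esub>}"
    if "2 \<le> k" "0 \<le> l" "even k" "k \<le> int n" "2 * l \<le> int n - k" for k l
  proof -
    let ?G = "E 1 k l"
    have G: "?G = H (int n - k - 1) l" using E1 that by simp
    have G1: "E 1 (k - 1) l = H (int n - k) l" using E1 that
      by (smt (verit))
    have dk: "\<forall>x\<in>carrier ?G. d 1 k l x = s (int n - k) l x" using d1_even that by blast
    have si: "s (int n - k) l \<in> iso (H (int n - k - 1) l) (H (int n - k) l)"
      by (intro stab_iso[rule_format]) (use that in auto)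
    have ghH: "group (H (int n - k - 1) l)" "group (H (int n - k) l)"
      using gr[of 1 k l] gr[of 1 "k-1" l] G G1 by auto
    have sh: "s (int n - k) l \<in> hom (H (int n - k - 1) l) (H (int n - k) l)"
      using si unfolding iso_def by blast
    have inj: "inj_on (s (int n - k) l) (carrier (H (int n - k - 1) l))"
      using si unfolding iso_def bij_betw_def by blast
    have s1: "s (int n - k) l \<one>\<^bsub>H (int n - k - 1) l\<^esub> = \<one>\<^bsub>H (int n - k) l\<^esub>"
      using hom_one[OF sh ghH] .
    have K: "kernel ?G (E 1 (k - 1) l) (d 1 k l) = {\<one>\<^bsub>?G\<^esub>}"
    proof -
      have "kernel ?G (E 1 (k - 1) l) (d 1 k l) = {x \<in> carrier (H (int n - k - 1) l). s (int n - k) l x = \<one>\<^bsub>H (int n - k) l\<^esub>}"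
        using dk G G1 by (auto simp: kernel_def)
      also have "\<dots> = {\<one>\<^bsub>H (int n - k - 1) l\<^esub>}"
      proof -
        have o: "\<one>\<^bsub>H (int n - k - 1) l\<^esub> \<in> carrier (H (int n - k - 1) l)"
          using group.is_monoid[OF ghH(1)] by (rule monoid.one_closed)
        show ?thesis
        proof (intro equalityI subsetI)
          fix x assume "x \<in> {x \<in> carrier (H (int n - k - 1) l). s (int n - k) l x = \<one>\<^bsub>H (int n - k) l\<^esub>}"
          then have x: "x \<in> carrier (H (int n - k - 1) l)" "s (int n - k) l x = s (int n - k) l \<one>\<^bsub>H (int n - k - 1) l\<^esub>"
            using s1 by auto
          have "x = \<one>\<^bsub>H (int n - k - 1) l\<^esub>" using inj_onD[OF inj x(2) x(1) o] .
          then show "x \<in> {\<one>\<^bsub>H (int n - k - 1) l\<^esub>}" by simp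
        next
          fix x assume "x \<in> {\<one>\<^bsub>H (int n - k - 1) l\<^esub>}"
          then show "x \<in> {x \<in> carrier (H (int n - k - 1) l). s (int n - k) l x = \<one>\<^bsub>H (int n - k) l\<^esub>}"
            using o s1 by simp
        qed
      qed
      finally show ?thesis using G by simp
    qed
    have "carrier (subgroup_generated ?G {\<one>\<^bsub>?G\<^esub>}) = {\<one>\<^bsub>?G\<^esub>}"
      using subgroup.carrier_subgroup_generated_subgroup[OF group.triv_subgroup[OF gr[of 1 k l]]] by simp
    then have "carrier (subgroup_generated ?G {\<one>\<^bsub>?G\<^esub>} Mod (d 1 (k+1) l ` carrier (E 1 (k+1) l)))
        \<subseteq> {(d 1 (k+1) l ` carrier (E 1 (k+1) l)) #>\<^bsub>subgroup_generated ?G {\<one>\<^bsub>?G\<^esub>}\<^esub> \<one>\<^bsub>?G\<^esub>}"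
      by (intro mod_triv1) simp
    moreover have "E (Suc 1) k l \<cong> subgroup_generated ?G {\<one>\<^bsub>?G\<^esub>} Mod (d 1 (k+1) l ` carrier (E 1 (k+1) l))"
      using next_iso[of 1 k l] K by simp
    ultimately have "carrier (E (Suc 1) k l) = {\<one>\<^bsub>E (Suc 1) k l\<^esub>}"
      using iso_triv mon by (metis le_add2 plus_1_eq_Suc)
    then show ?thesis by (simp add: numeral_2_eq_2)
  qed
  have vanish: "carrier (E r k l) = {\<one>\<^bsub>E r k l\<^esub>}"
    if "r \<ge> 2" "1 \<le> k" "l < 0 \<or> k > int n \<or> (0 \<le> l \<and> even k \<and> k \<le> int n \<and> 2 * l \<le> int n - k)
         \<or> (0 \<le> l \<and> odd k \<and> k + 1 \<le> int n \<and> 2 * l \<le> int n - k - 1)" for r k l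
  proof -
    have "carrier (E 1 k l) = {\<one>\<^bsub>E 1 k l\<^esub>} \<or> carrier (E 2 k l) = {\<one>\<^bsub>E 2 k l\<^esub>}"
    proof (cases "l < 0 \<or> k > int n")
      case True then show ?thesis using neg E1_top by blast
    next
      case False
      then have c: "(0 \<le> l \<and> even k \<and> k \<le> int n \<and> 2 * l \<le> int n - k)
         \<or> (0 \<le> l \<and> odd k \<and> k + 1 \<le> int n \<and> 2 * l \<le> int n - k - 1)" using that by auto
      show ?thesis
      proof (cases "even k")
        case True
        then have "k \<noteq> 1" by auto
        then show ?thesis using E2even True c that(2) by auto
      next
        case False then show ?thesis using E2odd c that(2) by auto
      qed
    qed
    then show ?thesis
    proof
      assume "carrier (E 1 k l) = {\<one>\<^bsub>E 1 k l\<^esub>}"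
      then show ?thesis using propr[of 1 r] that by simp
    next
      assume "carrier (E 2 k l) = {\<one>\<^bsub>E 2 k l\<^esub>}"
      then show ?thesis using propr[of 2 r] that by simp
    qed
  qed
  show ?thesis
  proof
    show "\<forall>l. 0 \<le> l \<and> 2 * l \<le> int n \<longrightarrow>
            (\<forall>r\<ge>1. \<forall>x\<in>carrier (E r (int r) (l - int r + 1)).
                 d r (int r) (l - int r + 1) x = \<one>\<^bsub>E r 0 l\<^esub>)"
    proof (intro allI impI ballI)
      fix l r x
      assume l: "0 \<le> l \<and> 2 * l \<le> int n" and r: "1 \<le> r" and x: "x \<in> carrier (E r (int r) (l - int r + 1))"
      show "d r (int r) (l - int r + 1) x = \<one>\<^bsub>E r 0 l\<^esub>"
      proof (cases "r = 1")
        case True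
        then show ?thesis using d1_odd x by simp
      next
        case False
        then have r2: "r \<ge> 2" using r by simp
        have "l - int r + 1 < 0 \<or> int r > int n \<or> (0 \<le> l - int r + 1 \<and> even (int r) \<and> int r \<le> int n \<and> 2 * (l - int r + 1) \<le> int n - int r)
         \<or> (0 \<le> l - int r + 1 \<and> odd (int r) \<and> int r + 1 \<le> int n \<and> 2 * (l - int r + 1) \<le> int n - int r - 1)"
        proof (cases "l - int r + 1 < 0 \<or> int r > int n")
          case True then show ?thesis by blast
        next
          case F: False
          show ?thesis
          proof (cases "even (int r)")
            case True then show ?thesis using F l r2 by auto
          next
            case False
            then have "r \<noteq> 2" by auto
            then have "r \<ge> 3" using r2 by simp
            then show ?thesis using F l False by auto
          qed
        qed
        then have triv: "carrier (E r (int r) (l - int r + 1)) = {\<one>\<^bsub>E r (int r) (l - int r + 1)\<^esub>}"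
          using vanish[OF r2] r2 by simp
        have "d r (int r) (l - int r + 1) \<one>\<^bsub>E r (int r) (l - int r + 1)\<^esub>
              = \<one>\<^bsub>E r (int r - int r) (l - int r + 1 + int r - 1)\<^esub>"
          using hom_one[OF dhom gr gr] r by simp
        then show ?thesis using triv x by simp
      qed
    qed
  next
    show "\<forall>k l. 0 < k \<and> 2 * (k + l) \<le> int n \<longrightarrow>
            (\<exists>r0. \<forall>r\<ge>r0. carrier (E r k l) = {\<one>\<^bsub>E r k l\<^esub>})"
    proof (intro allI impI)
      fix k l assume kl: "0 < k \<and> 2 * (k + l) \<le> int n"
      show "\<exists>r0. \<forall>r\<ge>r0. carrier (E r k l) = {\<one>\<^bsub>E r k l\<^esub>}"
      proof (rule exI[of _ 2], intro allI impI)
        fix r :: nat assume r: "r \<ge> 2"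
        have "l < 0 \<or> k > int n \<or> (0 \<le> l \<and> even k \<and> k \<le> int n \<and> 2 * l \<le> int n - k)
         \<or> (0 \<le> l \<and> odd k \<and> k + 1 \<le> int n \<and> 2 * l \<le> int n - k - 1)"
          using kl by (cases "even k") auto
        then show "carrier (E r k l) = {\<one>\<^bsub>E r k l\<^esub>}" using vanish r kl by simp
      qed
    qed
  qed
qed

end
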